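(* Let $\tau=(1+\sqrt5)/2$, $E=\mathbb{Q}(i,\sqrt5)$ with ring of integers $\mathcal{O}_E=\mathbb{Z}[i,\tau]$, and $\alpha=2+\sqrt5$. For each integer $n>0$ define integers $a_n,b_n$ by $a_n-b_n\sqrt5=(2-\sqrt5)^n$, and put $z_n=a_n+i\sqrt5\,b_n\in\mathcal{O}_E$. Let $$p_1(x)=x^2+i(1-\tau)x-1,\quad p_2(x)=x^2-i(1-\tau)x-1,\quad p_3(x)=x^2+i\tau x-1,\quad p_4(x)=x^2-i\tau x-1,$$ and for $j=1,2,3,4$ set $m_j(n)=\alpha^{-2n}p_j(\alpha^{2n})\in\mathcal{O}_E$. Then for every integer $n>0$, $z_n$ divides $z_{5n}$ in $\mathcal{O}_E$; more precisely, $$z_{5n}=z_n\,m_2(n)\,m_4(n)\quad\text{if } n \text{ is odd},\qquad z_{5n}=z_n\,m_1(n)\,m_3(n)\quad\text{if } n \text{ is even}.$$ *)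

theory Defs
  imports Complex_Main
begin

definition tau :: complex where
  "tau = complex_of_real ((1 + sqrt 5) / 2)"

text \<open>O_E = Z[i, tau]; since i^2 = -1 and tau^2 = tau + 1 this is the Z-span of 1, i, tau, i*tau.\<close>
definition OE :: "complex set" where
  "OE = {of_int a + of_int b * \<i> + of_int c * tau + of_int d * \<i> * tau | a b c d. True}"

definition alpha :: real where
  "alpha = 2 + sqrt 5"

definition p1 :: "complex \<Rightarrow> complex" where
  "p1 x = x^2 + \<i> * (1 - tau) * x - 1"
definition p2 :: "complex \<Rightarrow> complex" where
  "p2 x = x^2 - \<i> * (1 - tau) * x - 1"
definition p3 :: "complex \<Rightarrow> complex" where
  "p3 x = x^2 + \<i> * tau * x - 1"
definition p4 :: "complex \<Rightarrow> complex" where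
  "p4 x = x^2 - \<i> * tau * x - 1"

definition mval :: "(complex \<Rightarrow> complex) \<Rightarrow> nat \<Rightarrow> complex" where
  "mval p n = complex_of_real (inverse (alpha ^ (2*n))) * p (complex_of_real (alpha ^ (2*n)))"

definition zval :: "(nat \<Rightarrow> int) \<Rightarrow> (nat \<Rightarrow> int) \<Rightarrow> nat \<Rightarrow> complex" where
  "zval a b n = of_int (a n) + \<i> * complex_of_real (sqrt 5) * of_int (b n)"

end

theory Submission
  imports Defs "HOL-Computational_Algebra.Primes"
begin

lemma five_sq: "\<forall>m d::int. nat \<bar>d\<bar> = N \<longrightarrow> m^2 = 5*d^2 \<longrightarrow> d = 0"
proof (induction N rule: less_induct)
  case (less N)
  show ?case
  proof (intro allI impI)
    fix m d :: int assume N: "nat \<bar>d\<bar> = N" and e: "m^2 = 5*d^2"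
    have p: "prime (5::int)" by simp
    have "(5::int) dvd m^2" using e by simp
    hence "(5::int) dvd m" using p prime_dvd_power by blast
    then obtain k where k: "m = 5*k" by blast
    have e2: "d^2 = 5*k^2" using e k by (simp add: power2_eq_square)
    show "d = 0"
    proof (rule ccontr)
      assume "d \<noteq> 0"
      have kz: "k \<noteq> 0" using e2 \<open>d \<noteq> 0\<close> by auto
      have "k^2 > 0" using kz by simp
      hence "k^2 < d^2" using e2 by linarith
      hence "\<bar>k\<bar> < \<bar>d\<bar>" by (metis abs_ge_zero power2_abs power_less_imp_less_base)
      hence "nat \<bar>k\<bar> < N" using N by simp
      with less have "\<forall>m d::int. nat \<bar>d\<bar> = nat \<bar>k\<bar> \<longrightarrow> m^2 = 5*d^2 \<longrightarrow> d = 0" by blast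
      hence "k = 0" using e2 by blast
      thus False using e2 \<open>d \<noteq> 0\<close> by simp
    qed
  qed
qed

lemma irr: assumes "real_of_int m = real_of_int d * sqrt 5" shows "d = 0"
proof -
  have "(real_of_int m)^2 = (real_of_int d)^2 * (sqrt 5)^2" using assms by (simp add: power_mult_distrib)
  hence "real_of_int (m^2) = real_of_int (5*d^2)" by simp
  hence "m^2 = 5*d^2" by (simp only: of_int_eq_iff)
  thus ?thesis using five_sq by blast
qed

fun PQ :: "nat \<Rightarrow> int \<times> int" where
  "PQ 0 = (1, 0)"
| "PQ (Suc k) = (case PQ k of (p, q) \<Rightarrow> (2*p + 5*q, p + 2*q))"

lemma s5: "sqrt 5 * sqrt 5 = (5::real)" by simp

lemma PQ_eq: "(2 - sqrt 5)^k = real_of_int (fst (PQ k)) - real_of_int (snd (PQ k)) * sqrt 5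
  \<and> (2 + sqrt 5)^k = real_of_int (fst (PQ k)) + real_of_int (snd (PQ k)) * sqrt 5"
proof (induction k)
  case 0
  then show ?case by simp
next
  case (Suc k)
  obtain p q where pq: "PQ k = (p, q)" by fastforce
  have h1: "(2 - sqrt 5)^k = real_of_int p - real_of_int q * sqrt 5"
   and h2: "(2 + sqrt 5)^k = real_of_int p + real_of_int q * sqrt 5" using Suc pq by auto
  have "(2 - sqrt 5)^Suc k = (real_of_int p - real_of_int q * sqrt 5) * (2 - sqrt 5)" using h1 by simp
  also have "\<dots> = real_of_int (2*p+5*q) - real_of_int (p+2*q) * sqrt 5"
    by (simp add: algebra_simps s5)
  finally have A: "(2 - sqrt 5)^Suc k = real_of_int (2*p+5*q) - real_of_int (p+2*q) * sqrt 5" .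
  have "(2 + sqrt 5)^Suc k = (real_of_int p + real_of_int q * sqrt 5) * (2 + sqrt 5)" using h2 by simp
  also have "\<dots> = real_of_int (2*p+5*q) + real_of_int (p+2*q) * sqrt 5"
    by (simp add: algebra_simps s5)
  finally have B: "(2 + sqrt 5)^Suc k = real_of_int (2*p+5*q) + real_of_int (p+2*q) * sqrt 5" .
  show ?case using A B pq by simp
qed

lemma ab_eq:
  assumes ab: "\<forall>k>0. real_of_int (a k) - real_of_int (b k) * sqrt 5 = (2 - sqrt 5) ^ k"
    and k: "k > 0"
  shows "a k = fst (PQ k) \<and> b k = snd (PQ k)"
proof -
  have "real_of_int (a k) - real_of_int (b k) * sqrt 5 = real_of_int (fst (PQ k)) - real_of_int (snd (PQ k)) * sqrt 5"
    using ab k PQ_eq by simp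
  hence "real_of_int (a k - fst (PQ k)) = real_of_int (b k - snd (PQ k)) * sqrt 5"
    by (simp add: algebra_simps)
  hence "b k - snd (PQ k) = 0" by (rule irr)
  moreover from this have "a k - fst (PQ k) = 0"
    using \<open>real_of_int (a k - fst (PQ k)) = _\<close> by simp
  ultimately show ?thesis by simp
qed

lemma real_ab:
  assumes ab: "\<forall>k>0. real_of_int (a k) - real_of_int (b k) * sqrt 5 = (2 - sqrt 5) ^ k"
    and k: "k > 0"
  shows "real_of_int (a k) = ((2 + sqrt 5)^k + (2 - sqrt 5)^k) / 2"
    and "real_of_int (b k) * sqrt 5 = ((2 + sqrt 5)^k - (2 - sqrt 5)^k) / 2"
  using ab_eq[OF ab k] PQ_eq[of k] by simp_all

lemma zval_eq:
  assumes ab: "\<forall>k>0. real_of_int (a k) - real_of_int (b k) * sqrt 5 = (2 - sqrt 5) ^ k"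
    and k: "k > 0"
  shows "zval a b k = (complex_of_real ((2 + sqrt 5)^k) + complex_of_real ((2 - sqrt 5)^k)) / 2
     + \<i> * (complex_of_real ((2 + sqrt 5)^k) - complex_of_real ((2 - sqrt 5)^k)) / 2"
proof -
  define A where "A = (2 + sqrt 5)^k"
  define B where "B = (2 - sqrt 5)^k"
  have ha: "real_of_int (a k) = (A + B)/2" and hb: "real_of_int (b k) * sqrt 5 = (A - B)/2"
    using real_ab[OF ab k] unfolding A_def B_def by simp_all
  have "zval a b k = complex_of_real (real_of_int (a k)) + \<i> * complex_of_real (real_of_int (b k) * sqrt 5)"
    unfolding zval_def by (simp add: algebra_simps)
  also have "\<dots> = complex_of_real ((A + B)/2) + \<i> * complex_of_real ((A - B)/2)"
    by (simp only: ha hb)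
  also have "\<dots> = (complex_of_real A + complex_of_real B) / 2 + \<i> * (complex_of_real A - complex_of_real B) / 2"
    by (simp only: of_real_add of_real_diff of_real_divide of_real_numeral) simp
  finally show ?thesis unfolding A_def B_def .
qed

lemma cs5: "complex_of_real (sqrt 5) = 2 * tau - 1"
  unfolding tau_def by (simp add: algebra_simps)

lemma tau_sq: "tau^2 = tau + 1"
proof -
  have "(complex_of_real (sqrt 5))^2 = 5" by (simp flip: of_real_power)
  hence "(2*tau - 1)^2 = 5" by (simp add: cs5)
  hence "(tau*tau - tau - 1)*4 = 0" by (simp add: power2_eq_square algebra_simps)
  hence "tau*tau - tau - 1 = 0" by (metis mult_eq_0_iff zero_neq_numeral)
  hence "tau*tau = tau + 1" by (metis add.commute diff_add_cancel diff_diff_eq diff_zero)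
  thus ?thesis by (simp add: power2_eq_square)
qed

lemma OE_I: "z = of_int a + of_int b * \<i> + of_int c * tau + of_int d * \<i> * tau \<Longrightarrow> z \<in> OE"
  unfolding OE_def by blast

lemma G: "(of_int a + of_int b*\<i>)*(of_int a' + of_int b'*\<i>) = (of_int(a*a'-b*b') + of_int(a*b'+b*a')*\<i> :: complex)"
  by (simp add: algebra_simps)
lemma U: "t*t = t + 1 \<Longrightarrow> (u + v*t)*(u' + v'*t) = (u*u' + v*v') + (u*v'+v*u'+v*v')*(t::complex)"
proof -
  assume h: "t*t = t+1"
  have "(u + v*t)*(u' + v'*t) = u*u' + (u*v'+v*u')*t + v*v'*(t*t)" by (simp add: algebra_simps)
  thus ?thesis using h by (simp add: algebra_simps)
qed

lemma OE_alt: "z \<in> OE \<longleftrightarrow> (\<exists>a b c d. z = (of_int a + of_int b*\<i>) + (of_int c + of_int d*\<i>)*tau)"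
proof -
  have "\<And>a b c d. (of_int a + of_int b * \<i> + of_int c * tau + of_int d * \<i> * tau :: complex)
     = (of_int a + of_int b*\<i>) + (of_int c + of_int d*\<i>)*tau" by (simp add: algebra_simps)
  thus ?thesis unfolding OE_def by (simp only: mem_Collect_eq simp_thms)
qed

lemma OE_mult: assumes "z \<in> OE" "w \<in> OE" shows "z * w \<in> OE"
proof -
  obtain a b c d where z: "z = (of_int a + of_int b*\<i>) + (of_int c + of_int d*\<i>)*tau"
    using assms(1) unfolding OE_alt by blast
  obtain a' b' c' d' where w: "w = (of_int a' + of_int b'*\<i>) + (of_int c' + of_int d'*\<i>)*tau"
    using assms(2) unfolding OE_alt by blast
  have t2: "tau * tau = tau + 1" using tau_sq by (simp add: power2_eq_square)
  have "z * w = ((of_int a + of_int b*\<i>)*(of_int a' + of_int b'*\<i>) + (of_int c + of_int d*\<i>)*(of_int c' + of_int d'*\<i>))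
     + ((of_int a + of_int b*\<i>)*(of_int c' + of_int d'*\<i>) + (of_int c + of_int d*\<i>)*(of_int a' + of_int b'*\<i>)
        + (of_int c + of_int d*\<i>)*(of_int c' + of_int d'*\<i>)) * tau"
    unfolding z w by (rule U[OF t2])
  also have "\<dots> = (of_int (a*a'-b*b' + (c*c'-d*d')) + of_int (a*b'+b*a' + (c*d'+d*c'))*\<i>)
     + (of_int ((a*c'-b*d') + (c*a'-d*b') + (c*c'-d*d')) + of_int ((a*d'+b*c') + (c*b'+d*a') + (c*d'+d*c'))*\<i>) * tau"
    unfolding G by (simp add: algebra_simps)
  finally show ?thesis unfolding OE_alt by blast
qed


lemma s1: "x^2*y^2 = 1 \<Longrightarrow> y^2 * ((x^2)^2 + c*x^2 - 1) = x^2 + c - y^2" for x y c :: complex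
proof -
  assume h: "x^2*y^2 = 1"
  have "y^2 * ((x^2)^2 + c*x^2 - 1) = x^2*(x^2*y^2) + c*(x^2*y^2) - y^2" by (simp add: algebra_simps power2_eq_square)
  thus ?thesis using h by simp
qed
lemma s1m: "x^2*y^2 = 1 \<Longrightarrow> y^2 * ((x^2)^2 - c*x^2 - 1) = x^2 - c - y^2" for x y c :: complex
  using s1[of x y "-c"] by simp

lemma c24: "t*t = t+1 \<Longrightarrow> (D - \<i>*(1-t))*(D - \<i>*t) = D^2 + (-\<i>)*D + 1" for D t :: complex
  using Complex.i_squared by algebra
lemma c13: "t*t = t+1 \<Longrightarrow> (D + \<i>*(1-t))*(D + \<i>*t) = D^2 + \<i>*D + 1" for D t :: complex
  using Complex.i_squared by algebra
lemma odd3: "\<lbrakk>i^2 = -1; x*y = -1\<rbrakk> \<Longrightarrow>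
  ((x^5+y^5)/2 + i*(x^5-y^5)/2) = ((x+y)/2 + i*(x-y)/2) * ((x^2-y^2)^2 + (-i)*(x^2-y^2) + 1)"
  for i x y :: complex
  by algebra
lemma even3: "\<lbrakk>i^2 = -1; x*y = 1\<rbrakk> \<Longrightarrow>
  ((x^5+y^5)/2 + i*(x^5-y^5)/2) = ((x+y)/2 + i*(x-y)/2) * ((x^2-y^2)^2 + i*(x^2-y^2) + 1)"
  for i x y :: complex
  by algebra

theorem lemma3p1:
  fixes a b :: "nat \<Rightarrow> int" and n :: nat
  assumes ab: "\<forall>k>0. real_of_int (a k) - real_of_int (b k) * sqrt 5 = (2 - sqrt 5) ^ k"
    and n: "n > 0"
  shows "mval p1 n \<in> OE \<and> mval p2 n \<in> OE \<and> mval p3 n \<in> OE \<and> mval p4 n \<in> OE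
    \<and> zval a b n \<in> OE \<and> zval a b (5*n) \<in> OE
    \<and> (\<exists>w\<in>OE. zval a b (5*n) = zval a b n * w)
    \<and> (odd n \<longrightarrow> zval a b (5*n) = zval a b n * mval p2 n * mval p4 n)
    \<and> (even n \<longrightarrow> zval a b (5*n) = zval a b n * mval p1 n * mval p3 n)"
proof -
  define x where "x = complex_of_real ((2 + sqrt 5)^n)"
  define y where "y = complex_of_real ((2 - sqrt 5)^n)"
  have t2: "tau * tau = tau + 1" using tau_sq by (simp add: power2_eq_square)
  have i2: "\<i>^2 = (-1::complex)" by simp
  have pr: "(2 + sqrt 5) * (2 - sqrt 5) = (-1::real)" by (simp add: algebra_simps s5)
  have xy: "x * y = (-1)^n" unfolding x_def y_def
    by (simp only: of_real_mult[symmetric] power_mult_distrib[symmetric] pr) simp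
  have x2y2: "x^2 * y^2 = 1"
  proof -
    have "x^2*y^2 = (x*y)^2" by (simp add: power_mult_distrib)
    also have "\<dots> = 1" unfolding xy by (simp flip: power_mult add: mult.commute)
    finally show ?thesis .
  qed
  have X2: "complex_of_real ((2 + sqrt 5)^(2*n)) = x^2" unfolding x_def by (simp add: power_mult mult.commute)
  have Y2: "complex_of_real ((2 - sqrt 5)^(2*n)) = y^2" unfolding y_def by (simp add: power_mult mult.commute)
  have X5: "complex_of_real ((2 + sqrt 5)^(5*n)) = x^5" unfolding x_def by (simp add: power_mult mult.commute)
  have Y5: "complex_of_real ((2 - sqrt 5)^(5*n)) = y^5" unfolding y_def by (simp add: power_mult mult.commute)
  have inv: "inverse (alpha ^ (2*n)) = (2 - sqrt 5)^(2*n)"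
  proof (rule inverse_unique)
    have "alpha ^ (2*n) * (2 - sqrt 5)^(2*n) = ((2 + sqrt 5) * (2 - sqrt 5))^(2*n)"
      unfolding alpha_def by (simp add: power_mult_distrib)
    also have "\<dots> = 1" unfolding pr by simp
    finally show "alpha ^ (2*n) * (2 - sqrt 5)^(2*n) = 1" .
  qed
  have mv: "\<And>p. mval p n = y^2 * p (x^2)"
    unfolding mval_def inv Y2 using X2 unfolding alpha_def by simp
  define D where "D = x^2 - y^2"
  have m1: "mval p1 n = D + \<i>*(1-tau)" unfolding mv p1_def D_def using s1[OF x2y2, of "\<i>*(1-tau)"] by simp
  have m2: "mval p2 n = D - \<i>*(1-tau)" unfolding mv p2_def D_def using s1m[OF x2y2, of "\<i>*(1-tau)"] by simp
  have m3: "mval p3 n = D + \<i>*tau" unfolding mv p3_def D_def using s1[OF x2y2, of "\<i>*tau"] by simp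
  have m4: "mval p4 n = D - \<i>*tau" unfolding mv p4_def D_def using s1m[OF x2y2, of "\<i>*tau"] by simp
  define Q where "Q = snd (PQ (2*n))"
  have DQ: "D = of_int (2*Q) * complex_of_real (sqrt 5)"
  proof -
    have "(2 + sqrt 5)^(2*n) - (2 - sqrt 5)^(2*n) = real_of_int (2*Q) * sqrt 5"
      using PQ_eq[of "2*n"] unfolding Q_def by simp
    hence "complex_of_real ((2 + sqrt 5)^(2*n) - (2 - sqrt 5)^(2*n)) = complex_of_real (real_of_int (2*Q) * sqrt 5)"
      by simp
    thus ?thesis unfolding D_def X2[symmetric] Y2[symmetric] by simp
  qed
  have DQ': "D = of_int (-2*Q) + of_int (4*Q) * tau" unfolding DQ cs5 by (simp add: algebra_simps)
  have M1: "mval p1 n \<in> OE" by (rule OE_I[where a="-2*Q" and b=1 and c="4*Q" and d="-1"]) (simp add: m1 DQ' algebra_simps)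
  have M2: "mval p2 n \<in> OE" by (rule OE_I[where a="-2*Q" and b="-1" and c="4*Q" and d="1"]) (simp add: m2 DQ' algebra_simps)
  have M3: "mval p3 n \<in> OE" by (rule OE_I[where a="-2*Q" and b=0 and c="4*Q" and d="1"]) (simp add: m3 DQ' algebra_simps)
  have M4: "mval p4 n \<in> OE" by (rule OE_I[where a="-2*Q" and b=0 and c="4*Q" and d="-1"]) (simp add: m4 DQ' algebra_simps)
  have ZOE: "\<And>k. zval a b k \<in> OE"
  proof -
    fix k
    show "zval a b k \<in> OE"
      by (rule OE_I[where a="a k" and b="- b k" and c=0 and d="2 * b k"]) (simp add: zval_def cs5 algebra_simps)
  qed
  have zn: "zval a b n = (x + y)/2 + \<i>*(x - y)/2" using zval_eq[OF ab n] unfolding x_def y_def .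
  have z5n: "zval a b (5*n) = (x^5 + y^5)/2 + \<i>*(x^5 - y^5)/2"
    using zval_eq[OF ab, of "5*n"] n unfolding X5 Y5 by simp
  have odd_case: "odd n \<longrightarrow> zval a b (5*n) = zval a b n * mval p2 n * mval p4 n"
  proof
    assume o: "odd n"
    have "x*y = -1" using xy o by simp
    hence "zval a b (5*n) = zval a b n * (D^2 + (-\<i>)*D + 1)"
      unfolding z5n zn D_def by (rule odd3[OF i2])
    also have "\<dots> = zval a b n * (mval p2 n * mval p4 n)" unfolding m2 m4 c24[OF t2] ..
    finally show "zval a b (5*n) = zval a b n * mval p2 n * mval p4 n" by (simp add: mult.assoc)
  qed
  have even_case: "even n \<longrightarrow> zval a b (5*n) = zval a b n * mval p1 n * mval p3 n"
  proof
    assume e: "even n"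
    have "x*y = 1" using xy e by simp
    hence "zval a b (5*n) = zval a b n * (D^2 + \<i>*D + 1)"
      unfolding z5n zn D_def by (rule even3[OF i2])
    also have "\<dots> = zval a b n * (mval p1 n * mval p3 n)" unfolding m1 m3 c13[OF t2] ..
    finally show "zval a b (5*n) = zval a b n * mval p1 n * mval p3 n" by (simp add: mult.assoc)
  qed
  have ex: "\<exists>w\<in>OE. zval a b (5*n) = zval a b n * w"
  proof (cases "even n")
    case True
    thus ?thesis using even_case OE_mult[OF M1 M3] by (metis mult.assoc)
  next
    case False
    thus ?thesis using odd_case OE_mult[OF M2 M4] by (metis mult.assoc)
  qed
  show ?thesis using M1 M2 M3 M4 ZOE ex odd_case even_case by blast
qed

end
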